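(* For every integer $n\ge0$, $B_{3,1}(n)=T(n)$. Here $B_{3,1}(n)$ is the number of partitions $\pi=(\pi_1\ge\pi_2\ge\dots\ge\pi_\ell)$ of $n$ such that $m_1(\pi)=0$, $m_j(\pi)+m_{j+1}(\pi)\le 2$ for all $j\ge1$, and for every $1\le j<\ell$, if $\pi_j-\pi_{j+1}\le1$ then $\pi_j+\pi_{j+1}\equiv 0\pmod 2$. And $T(n)$ is the number of partitions $\lambda$ of $n$ such that: $m_j(\lambda)\le 1$ for odd $j$; $m_j(\lambda)=0$ for odd $j<R_1(\lambda)+2$; $m_j(\lambda)\ge2$ for even $j$ with $0<j<R_1(\lambda)$; and no two consecutive integers both appear as parts of $\lambda$.
   Context: $m_j(\pi)$ is the multiplicity of $j$ as a part of $\pi$. $R_1(\lambda)$ is the largest part of $\lambda$ with multiplicity at least $2$, or $0$ if there is none. *)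

theory Defs
  imports Main
begin

definition partitions :: "nat \<Rightarrow> nat list set" where
  "partitions n = {p. sorted_wrt (\<ge>) p \<and> 0 \<notin> set p \<and> sum_list p = n}"

abbreviation mult :: "nat \<Rightarrow> nat list \<Rightarrow> nat" where
  "mult j p \<equiv> count_list p j"

definition R1 :: "nat list \<Rightarrow> nat" where
  "R1 p = (if \<exists>j. mult j p \<ge> 2 then Max {j. mult j p \<ge> 2} else 0)"

definition B31_cond :: "nat list \<Rightarrow> bool" where
  "B31_cond p \<longleftrightarrow>
     mult 1 p = 0 \<and>
     (\<forall>j\<ge>1. mult j p + mult (j+1) p \<le> 2) \<and>
     (\<forall>i. i + 1 < length p \<longrightarrow> p!i - p!(i+1) \<le> 1 \<longrightarrow> even (p!i + p!(i+1)))"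

definition B31 :: "nat \<Rightarrow> nat" where
  "B31 n = card {p \<in> partitions n. B31_cond p}"

definition T_cond :: "nat list \<Rightarrow> bool" where
  "T_cond l \<longleftrightarrow>
     (\<forall>j. odd j \<longrightarrow> mult j l \<le> 1) \<and>
     (\<forall>j. odd j \<and> j < R1 l + 2 \<longrightarrow> mult j l = 0) \<and>
     (\<forall>j. even j \<and> 0 < j \<and> j < R1 l \<longrightarrow> mult j l \<ge> 2) \<and>
     (\<forall>j. \<not> (j \<in> set l \<and> j + 1 \<in> set l))"

definition T :: "nat \<Rightarrow> nat" where
  "T n = card {l \<in> partitions n. T_cond l}"

end

theory Submission
  imports Defs
begin


function F :: "int \<Rightarrow> nat \<Rightarrow> nat \<Rightarrow> nat \<Rightarrow> int" where
  "F n c k m = (if n < 0 then 0 else if k = 0 \<and> m = 0 then (if n = 0 then 1 else 0)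
     else if n < int c \<or> c = 0 then 0
     else F n (c+1) k m + (if 0 < m then F (n - int c) (c+2) k (m-1) else 0)
          + (if 0 < k then F (n - 2 * int c) (c+2) (k-1) m else 0))"
  by pat_completeness auto
termination by (relation "measure (\<lambda>(n,c,k,m). nat (n - int c + 1))") auto

declare F.simps[simp del]

lemma F_neg: "n < 0 \<Longrightarrow> F n c k m = 0" by (subst F.simps) simp

lemma F_rec: assumes c1: "1 \<le> c" shows "F n c k m = F n (c+1) k m + (if 0 < m then F (n - int c) (c+2) k (m-1) else 0)
          + (if 0 < k then F (n - 2 * int c) (c+2) (k-1) m else 0)"
proof (cases "n < 0")
  case True then show ?thesis by (simp add: F_neg)
next
  case False
  show ?thesis
  proof (cases "k = 0 \<and> m = 0")
    case True then show ?thesis using False by (subst (1 2) F.simps) simp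
  next
    case km: False
    show ?thesis
    proof (cases "n < int c")
      case True
      then show ?thesis using False km
        by (subst (1 2) F.simps) (auto simp: F_neg)
    next
      case False2: False
      then show ?thesis using False km c1 by (subst F.simps) auto
    qed
  qed
qed

lemma F_00: "F n c 0 0 = (if n = 0 then 1 else 0)" by (subst F.simps) simp

lemma F_small: "n < int c \<Longrightarrow> \<not> (k = 0 \<and> m = 0) \<Longrightarrow> F n c k m = 0"
  by (subst F.simps) simp

lemma F_vanish: "F n c k m \<noteq> 0 \<Longrightarrow> int c * int (2*k+m) \<le> n"
proof (induction n c k m rule: F.induct)
  case (1 n c k m)
  show ?case
  proof (cases "n < 0 \<or> (k = 0 \<and> m = 0) \<or> n < int c \<or> c = 0")
    case True
    show ?thesis
    proof (cases "n < 0")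
      case True then show ?thesis using "1.prems" by (simp add: F_neg)
    next
      case n0: False
      show ?thesis
      proof (cases "k = 0 \<and> m = 0")
        case True then show ?thesis using n0 by simp
      next
        case False
        then have "n < int c" using \<open>n < 0 \<or> (k = 0 \<and> m = 0) \<or> n < int c \<or> c = 0\<close> n0 "1.prems"
          by (metis F.simps)
        then show ?thesis using "1.prems" F_small False by blast
      qed
    qed
  next
    case False
    then have c1: "1 \<le> c" by auto
    have disj: "F n (c+1) k m \<noteq> 0 \<or> (0 < m \<and> F (n - int c) (c+2) k (m-1) \<noteq> 0)
      \<or> (0 < k \<and> F (n - 2*int c) (c+2) (k-1) m \<noteq> 0)"
      using "1.prems" F_rec[OF c1, of n k m] by (auto split: if_splits)
    then consider "F n (c+1) k m \<noteq> 0" | "0 < m" "F (n - int c) (c+2) k (m-1) \<noteq> 0"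
      | "0 < k" "F (n - 2*int c) (c+2) (k-1) m \<noteq> 0"
      by blast
    then show ?thesis
    proof cases
      case 1
      then have h: "int (c+1) * int (2*k+m) \<le> n" using "1.IH"(1) False by auto
      have "int c * int (2*k+m) \<le> int (c+1) * int (2*k+m)" by (simp add: mult_right_mono)
      then show ?thesis using h by linarith
    next
      case 2
      then have h: "int (c+2) * int (2*k+(m-1)) \<le> n - int c" using "1.IH"(2) False by auto
      have "int c * int (2*k+m) = int c * int (2*k+(m-1)) + int c" using 2 by (simp add: algebra_simps of_nat_diff)
      moreover have "int c * int (2*k+(m-1)) \<le> int (c+2) * int (2*k+(m-1))" by (simp add: mult_right_mono)
      ultimately show ?thesis using h by linarith
    next
      case 3
      then have h: "int (c+2) * int (2*(k-1)+m) \<le> n - 2*int c" using "1.IH"(3) False by auto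
      have e: "int c * int (2*k+m) = int c * int (2*(k-1)+m) + 2 * int c" using 3 by (simp add: algebra_simps of_nat_diff)
      have "int (c+2) * int (2*(k-1)+m) = int c * int (2*(k-1)+m) + 2 * int (2*(k-1)+m)" by (simp add: algebra_simps)
      then show ?thesis using h e by linarith
    qed
  qed
qed

lemma F_shift_aux:
  assumes IHo: "\<And>k' m' x c. k' + m' < k + m \<Longrightarrow> 1 \<le> c \<Longrightarrow> F (x + int (2*k'+m')) (Suc c) k' m' = F x c k' m'"
  shows "1 \<le> c \<Longrightarrow> F (x + int (2*k+m)) (Suc c) k m = F x c k m"
proof (induction "nat (x - int c + 1)" arbitrary: x c rule: less_induct)
  case less
  show ?case
  proof (cases "k = 0 \<and> m = 0")
    case True then show ?thesis by (simp add: F_00)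
  next
    case km: False
    then have N1: "1 \<le> 2*k+m" by auto
    show ?thesis
    proof (cases "x < int c")
      case True
      have R: "F x c k m = 0"
        by (cases "x < 0") (auto simp: F_neg F_small True km)
      have "F (x + int (2*k+m)) (Suc c) k m = 0"
      proof (rule ccontr)
        assume "F (x + int (2*k+m)) (Suc c) k m \<noteq> 0"
        from F_vanish[OF this] have "int (Suc c) * int (2*k+m) \<le> x + int (2*k+m)" .
        then have "int c * int (2*k+m) \<le> x" by (simp add: algebra_simps)
        moreover have "int c \<le> int c * int (2*k+m)" using N1 by (simp add: mult_le_cancel_left1)
        ultimately show False using True by linarith
      qed
      then show ?thesis using R by simp
    next
      case False
      have c1: "1 \<le> Suc c" by simp
      have t1: "F (x + int (2*k+m)) (Suc c + 1) k m = F x (c+1) k m"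
        using less.hyps[of x "c+1"] False less.prems by simp
      have t2: "0 < m \<Longrightarrow> F (x + int (2*k+m) - int (Suc c)) (Suc c + 2) k (m-1) = F (x - int c) (c+2) k (m-1)"
      proof -
        assume m0: "0 < m"
        have eq: "x + int (2*k+m) - int (Suc c) = (x - int c) + int (2*k+(m-1))" using m0 by simp
        have eq2: "Suc c + 2 = Suc (c+2)" by simp
        show ?thesis unfolding eq eq2 by (rule IHo) (use m0 in auto)
      qed
      have t3: "0 < k \<Longrightarrow> F (x + int (2*k+m) - 2 * int (Suc c)) (Suc c + 2) (k-1) m = F (x - 2 * int c) (c+2) (k-1) m"
      proof -
        assume k0: "0 < k"
        have eq: "x + int (2*k+m) - 2 * int (Suc c) = (x - 2*int c) + int (2*(k-1)+m)" using k0 by simp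
        have eq2: "Suc c + 2 = Suc (c+2)" by simp
        show ?thesis unfolding eq eq2 by (rule IHo) (use k0 in auto)
      qed
      have r: "F (x + int (2*k+m)) (Suc c) k m = F (x + int (2*k+m)) (Suc c + 1) k m
          + (if 0 < m then F (x + int (2*k+m) - int (Suc c)) (Suc c + 2) k (m-1) else 0)
          + (if 0 < k then F (x + int (2*k+m) - 2 * int (Suc c)) (Suc c + 2) (k-1) m else 0)"
        by (rule F_rec[OF c1])
      have A: "F (x + int (2*k+m)) (Suc c) k m = F x (c+1) k m
          + (if 0 < m then F (x - int c) (c+2) k (m-1) else 0)
          + (if 0 < k then F (x - 2 * int c) (c+2) (k-1) m else 0)"
        by (cases "0<m"; cases "0<k") (simp_all only: r t1 t2 t3 if_True if_False)
      show ?thesis using A F_rec[OF less.prems, of x k m] by simp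
    qed
  qed
qed

lemma F_shift: "1 \<le> c \<Longrightarrow> F (x + int (2*k+m)) (Suc c) k m = F x c k m"
proof (induction "k+m" arbitrary: k m x c rule: less_induct)
  case less
  show ?case by (rule F_shift_aux) (use less in auto)
qed

lemma F_shift': "1 \<le> c \<Longrightarrow> F y (Suc c) k m = F (y - int (2*k+m)) c k m"
  using F_shift[of c "y - int (2*k+m)" k m] by simp

lemma F_shift2: assumes c1: "1 \<le> c" shows "F y (Suc (Suc c)) k m = F (y - 2 * int (2*k+m)) c k m"
proof -
  have "F y (Suc (Suc c)) k m = F (y - int (2*k+m)) (Suc c) k m" by (rule F_shift') simp
  also have "\<dots> = F (y - int (2*k+m) - int (2*k+m)) c k m" by (rule F_shift'[OF c1])
  also have "y - int (2*k+m) - int (2*k+m) = y - 2 * int (2*k+m)" by simp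
  finally show ?thesis .
qed

lemma beta_rec:
  assumes "\<not> (k = 0 \<and> m = 0)"
  shows "F n 2 k m = F (n - int (2*k+m)) 2 k m
     + (if 0 < m then F (n - 2 * int (2*k+m)) 2 k (m-1) else 0)
     + (if 0 < k then F (n - 2 * int (2*k+m)) 2 (k-1) m else 0)"
proof -
  have r: "F n 2 k m = F n 3 k m + (if 0 < m then F (n - 2) 4 k (m-1) else 0)
     + (if 0 < k then F (n - 4) 4 (k-1) m else 0)"
    using F_rec[of 2 n k m] by (simp add: numeral_eq_Suc)
  have a: "F n 3 k m = F (n - int (2*k+m)) 2 k m"
    using F_shift'[of 2 n k m] by (simp add: numeral_eq_Suc)
  have b: "0 < m \<Longrightarrow> F (n - 2) 4 k (m-1) = F (n - 2 * int (2*k+m)) 2 k (m-1)"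
    using F_shift2[of 2 "n-2" k "m-1"] by (simp add: numeral_eq_Suc of_nat_diff algebra_simps)
  have c: "0 < k \<Longrightarrow> F (n - 4) 4 (k-1) m = F (n - 2 * int (2*k+m)) 2 (k-1) m"
    using F_shift2[of 2 "n-4" "k-1" m] by (simp add: numeral_eq_Suc of_nat_diff algebra_simps)
  show ?thesis using r a b c by (cases "0<m"; cases "0<k") simp_all
qed

function Wg :: "(int \<Rightarrow> int) \<Rightarrow> nat \<Rightarrow> int \<Rightarrow> int" where
  "Wg g c n = (if n < 0 \<or> c = 0 then 0 else Wg g c (n - int c) + g n)"
  by pat_completeness auto
termination by (relation "measure (\<lambda>(g,c,n). nat (n + 1))") auto

declare Wg.simps[simp del]

lemma Wg_neg: "n < 0 \<Longrightarrow> Wg g c n = 0" by (subst Wg.simps) simp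

lemma Wg_rec: "1 \<le> c \<Longrightarrow> 0 \<le> n \<Longrightarrow> Wg g c n = Wg g c (n - int c) + g n"
  by (subst Wg.simps) simp

lemma Wg_split:
  assumes c1: "1 \<le> c" and s0: "0 \<le> s"
    and g: "\<And>x. g x = g (x - s) + h x" and gneg: "\<And>x. x < 0 \<Longrightarrow> g x = 0"
  shows "Wg g c n = Wg g c (n - s) + Wg h c n"
proof (induction "nat (n+1)" arbitrary: n rule: less_induct)
  case less
  show ?case
  proof (cases "n < 0")
    case True then show ?thesis using s0 by (simp add: Wg_neg)
  next
    case False
    have IH: "Wg g c (n - int c) = Wg g c (n - int c - s) + Wg h c (n - int c)"
      using less.hyps[of "n - int c"] False c1 by simp
    have A: "Wg g c n = Wg g c (n - int c) + g n" using Wg_rec[OF c1] False by simp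
    have B: "Wg h c n = Wg h c (n - int c) + h n" using Wg_rec[OF c1] False by simp
    have C: "Wg g c (n - s) = Wg g c (n - s - int c) + g (n - s)"
    proof (cases "n - s < 0")
      case True then show ?thesis using gneg s0 by (simp add: Wg_neg)
    next
      case False then show ?thesis using Wg_rec[OF c1] by simp
    qed
    have D: "n - int c - s = n - s - int c" by simp
    show ?thesis using A B C D IH g[of n] by simp
  qed
qed

lemma Wg_shift:
  assumes c1: "1 \<le> c" and t0: "0 \<le> t" and gneg: "\<And>x. x < 0 \<Longrightarrow> g x = 0"
  shows "Wg (\<lambda>x. g (x - t)) c n = Wg g c (n - t)"
proof (induction "nat (n+1)" arbitrary: n rule: less_induct)
  case less
  show ?case
  proof (cases "n - t < 0")
    case True
    show ?thesis
    proof (cases "n < 0")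
      case True then show ?thesis using t0 by (simp add: Wg_neg)
    next
      case False
      have "Wg (\<lambda>x. g (x - t)) c n = Wg (\<lambda>x. g (x - t)) c (n - int c) + g (n - t)"
        using Wg_rec[OF c1] False by simp
      moreover have "Wg (\<lambda>x. g (x - t)) c (n - int c) = Wg g c (n - int c - t)"
        using less.hyps[of "n - int c"] False c1 by simp
      ultimately show ?thesis using \<open>n - t < 0\<close> gneg c1 by (simp add: Wg_neg)
    qed
  next
    case False
    then have n0: "0 \<le> n" using t0 by linarith
    have "Wg (\<lambda>x. g (x - t)) c n = Wg (\<lambda>x. g (x - t)) c (n - int c) + g (n - t)"
      using Wg_rec[OF c1] n0 by simp
    moreover have "Wg (\<lambda>x. g (x - t)) c (n - int c) = Wg g c (n - int c - t)"
      using less.hyps[of "n - int c"] n0 c1 by simp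
    moreover have "Wg g c (n - t) = Wg g c (n - t - int c) + g (n - t)"
      using Wg_rec[OF c1] False by simp
    ultimately show ?thesis by (simp add: algebra_simps)
  qed
qed

primrec U :: "nat \<Rightarrow> int \<Rightarrow> nat \<Rightarrow> nat \<Rightarrow> int" where
  "U 0 n c m = F n c 0 m"
| "U (Suc k) n c m = Wg (\<lambda>x. U k x (c+2) m) c (n - 2 * int c)"

lemma U_neg: "n < 0 \<Longrightarrow> U k n c m = 0"
  by (cases k) (simp_all add: F_neg Wg_neg)

lemma U_R1:
  "1 \<le> c \<Longrightarrow> U (Suc k) n c m = U (Suc k) (n - int (c + 2*k)) c m + U k (n - 2 * int (c + 2*k) - 2 * int m) c m"
proof (induction k arbitrary: n c)
  case 0
  note c1 = "0.prems"
  show ?case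
  proof (cases "n - 2 * int c < 0")
    case True
    then show ?thesis using c1 by (simp add: Wg_neg F_neg)
  next
    case False
    have "Wg (\<lambda>x. F x (c+2) 0 m) c (n - 2 * int c) = Wg (\<lambda>x. F x (c+2) 0 m) c (n - 2 * int c - int c) + F (n - 2 * int c) (c+2) 0 m"
      using Wg_rec[OF c1] False by simp
    moreover have "F (n - 2 * int c) (c+2) 0 m = F (n - 2 * int c - 2 * int m) c 0 m"
      using F_shift2[OF c1, of "n - 2 * int c" 0 m] by simp
    moreover have "n - 2 * int c - int c = n - int c - 2 * int c" by simp
    ultimately show ?thesis by (simp add: algebra_simps)
  qed
next
  case (Suc k)
  note c1 = "Suc.prems"
  define g where "g = (\<lambda>x. U (Suc k) x (c+2) m)"
  define s where "s = int (c + 2 + 2*k)"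
  define t where "t = 2 * s + 2 * int m"
  define h where "h = (\<lambda>x. U k (x - t) (c+2) m)"
  have gr: "g x = g (x - s) + h x" for x
  proof -
    have a: "x - t = x - 2 * s - 2 * int m" using t_def by linarith
    have IH: "U (Suc k) x (c+2) m = U (Suc k) (x - int (c + 2 + 2*k)) (c+2) m + U k (x - 2 * int (c+2+2*k) - 2 * int m) (c+2) m"
      by (rule Suc.IH) simp
    show ?thesis unfolding g_def h_def a s_def by (rule IH)
  qed
  have s0: "0 \<le> s" by (simp add: s_def)
  have gneg: "x < 0 \<Longrightarrow> g x = 0" for x by (simp add: g_def U_neg Wg_neg)
  have sp: "Wg g c y = Wg g c (y - s) + Wg h c y" for y
    by (rule Wg_split[where g=g and h=h and s=s, OF c1 s0 gr gneg])
  have t0: "0 \<le> t" by (simp add: t_def s_def)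
  have hs: "Wg h c y = Wg (\<lambda>x. U k x (c+2) m) c (y - t)" for y
    unfolding h_def by (rule Wg_shift[OF c1 t0]) (simp add: U_neg)
  have e1: "U (Suc (Suc k)) n c m = Wg g c (n - 2 * int c)" by (simp add: g_def)
  have e2: "U (Suc (Suc k)) (n - int (c + 2 * Suc k)) c m = Wg g c (n - 2 * int c - s)"
  proof -
    have "n - int (c + 2 * Suc k) - 2 * int c = n - 2 * int c - s" by (simp add: s_def)
    then show ?thesis by (simp only: U.simps g_def)
  qed
  have e3: "U (Suc k) (n - 2 * int (c + 2 * Suc k) - 2 * int m) c m = Wg (\<lambda>x. U k x (c+2) m) c (n - 2 * int c - t)"
  proof -
    have "n - 2 * int (c + 2 * Suc k) - 2 * int m - 2 * int c = n - 2 * int c - t" by (simp add: s_def t_def)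
    then show ?thesis by (simp only: U.simps)
  qed
  show ?case unfolding e1 e2 e3 by (simp only: sp[of "n - 2 * int c"] hs[of "n - 2 * int c"])
qed

lemma U_R2:
  "1 \<le> c \<Longrightarrow> 0 < m \<Longrightarrow> U k n c m = U k (n - int m) c m + U k (n - int (c + 2*k) - 2 * int (m - 1)) c (m-1)"
proof (induction k arbitrary: n c)
  case 0
  note c1 = "0.prems"(1)
  have "F n c 0 m = F n (c+1) 0 m + F (n - int c) (c+2) 0 (m-1)"
    using F_rec[OF c1, of n 0 m] "0.prems" by simp
  moreover have "F n (c+1) 0 m = F (n - int m) c 0 m" using F_shift'[OF c1, of n 0 m] by simp
  moreover have "F (n - int c) (c+2) 0 (m-1) = F (n - int c - 2 * int (m-1)) c 0 (m-1)"
    using F_shift2[OF c1, of "n - int c" 0 "m-1"] by simp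
  ultimately show ?case by simp
next
  case (Suc k)
  note c1 = "Suc.prems"(1)
  define g where "g = (\<lambda>x. U k x (c+2) m)"
  define t where "t = int (c + 2 + 2*k) + 2 * int (m - 1)"
  define h where "h = (\<lambda>x. U k (x - t) (c+2) (m - 1))"
  have gr: "g x = g (x - int m) + h x" for x
  proof -
    have a: "x - t = x - int (c + 2 + 2*k) - 2 * int (m - 1)" using t_def by linarith
    have IH: "U k x (c+2) m = U k (x - int m) (c+2) m + U k (x - int (c + 2 + 2*k) - 2 * int (m - 1)) (c+2) (m-1)"
      by (rule Suc.IH) (use Suc.prems in simp_all)
    show ?thesis unfolding g_def h_def a by (rule IH)
  qed
  have gneg: "x < 0 \<Longrightarrow> g x = 0" for x by (simp add: g_def U_neg Wg_neg)
  have sp: "Wg g c y = Wg g c (y - int m) + Wg h c y" for y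
    by (rule Wg_split[where g=g and h=h and s="int m", OF c1 _ gr gneg]) simp
  have t0: "0 \<le> t" by (simp add: t_def)
  have hs: "Wg h c y = Wg (\<lambda>x. U k x (c+2) (m-1)) c (y - t)" for y
    unfolding h_def by (rule Wg_shift[OF c1 t0]) (simp add: U_neg)
  have e1: "U (Suc k) n c m = Wg g c (n - 2 * int c)" by (simp add: g_def)
  have e2: "U (Suc k) (n - int m) c m = Wg g c (n - 2 * int c - int m)"
  proof -
    have "n - int m - 2 * int c = n - 2 * int c - int m" by simp
    then show ?thesis by (simp only: U.simps g_def)
  qed
  have e3: "U (Suc k) (n - int (c + 2 * Suc k) - 2 * int (m - 1)) c (m-1) = Wg (\<lambda>x. U k x (c+2) (m-1)) c (n - 2 * int c - t)"
  proof -
    have "n - int (c + 2 * Suc k) - 2 * int (m - 1) - 2 * int c = n - 2 * int c - t" by (simp add: t_def)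
    then show ?thesis by (simp only: U.simps)
  qed
  show ?case unfolding e1 e2 e3 by (simp only: sp[of "n - 2 * int c"] hs[of "n - 2 * int c"])
qed

lemma tau_rec:
  assumes km: "\<not> (k = 0 \<and> m = 0)"
  shows "U k n 2 m = U k (n - int (2*k+m)) 2 m
     + (if 0 < m then U k (n - 2 * int (2*k+m)) 2 (m-1) else 0)
     + (if 0 < k then U (k-1) (n - 2 * int (2*k+m)) 2 m else 0)"
proof (cases k)
  case 0
  then have m0: "0 < m" using km by simp
  have "U 0 n 2 m = U 0 (n - int m) 2 m + U 0 (n - int (2 + 2*0) - 2 * int (m - 1)) 2 (m-1)"
    by (rule U_R2) (use m0 in auto)
  moreover have "n - int (2 + 2*0) - 2 * int (m - 1) = n - 2 * int (2*0+m)" using m0 by simp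
  ultimately show ?thesis using 0 m0 by simp
next
  case (Suc k')
  have r1: "U (Suc k') n 2 m = U (Suc k') (n - int (2 + 2*k')) 2 m + U k' (n - 2 * int (2 + 2*k') - 2 * int m) 2 m"
    by (rule U_R1) simp
  have e1: "n - 2 * int (2 + 2*k') - 2 * int m = n - 2 * int (2*Suc k'+m)" by simp
  show ?thesis
  proof (cases "m = 0")
    case True
    have e0: "n - int (2 + 2*k') = n - int (2*Suc k'+m)" using True by simp
    show ?thesis using r1 unfolding e0 e1 using Suc True by simp
  next
    case False
    have r2: "U (Suc k') (n - int (2 + 2*k')) 2 m = U (Suc k') (n - int (2 + 2*k') - int m) 2 m
       + U (Suc k') (n - int (2 + 2*k') - int (2 + 2 * Suc k') - 2 * int (m - 1)) 2 (m-1)"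
      by (rule U_R2) (use False in auto)
    have e2: "n - int (2 + 2*k') - int m = n - int (2*Suc k'+m)" by simp
    have e3: "n - int (2 + 2*k') - int (2 + 2 * Suc k') - 2 * int (m - 1) = n - 2 * int (2*Suc k'+m)"
      using False by simp
    show ?thesis using r1 r2 unfolding e1 e2 e3 using Suc False by simp
  qed
qed

lemma main_eq: "F n 2 k m = U k n 2 m"
proof (induction "k+m" arbitrary: k m n rule: less_induct)
  case less
  note IHo = less.hyps
  show ?case
  proof (induction "nat (n+1)" arbitrary: n rule: less_induct)
    case (less n)
    note IHn = less.hyps
    show ?case
    proof (cases "n < 0")
      case True then show ?thesis by (simp add: F_neg U_neg)
    next
      case n0: False
      show ?thesis
      proof (cases "k = 0 \<and> m = 0")
        case True then show ?thesis by simp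
      next
        case km: False
        have N: "1 \<le> 2*k+m" using km by auto
        have a: "F (n - int (2*k+m)) 2 k m = U k (n - int (2*k+m)) 2 m"
          by (rule IHn) (use N n0 in auto)
        have b: "0 < m \<Longrightarrow> F (n - 2 * int (2*k+m)) 2 k (m-1) = U k (n - 2 * int (2*k+m)) 2 (m-1)"
          by (rule IHo) auto
        have c: "0 < k \<Longrightarrow> F (n - 2 * int (2*k+m)) 2 (k-1) m = U (k-1) (n - 2 * int (2*k+m)) 2 m"
          by (rule IHo) auto
        show ?thesis unfolding beta_rec[OF km, of n] tau_rec[OF km, of n] using a b c by simp
      qed
    qed
  qed
qed



definition nc :: "nat list \<Rightarrow> bool" where "nc L \<longleftrightarrow> (\<forall>j. \<not> (j \<in> set L \<and> Suc j \<in> set L))"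
definition kk :: "nat list \<Rightarrow> nat" where "kk L = card {j. 2 \<le> count_list L j}"
definition mm :: "nat list \<Rightarrow> nat" where "mm L = card {j. count_list L j = 1}"
definition TB :: "nat \<Rightarrow> nat list \<Rightarrow> bool" where
  "TB c L \<longleftrightarrow> sorted L \<and> (\<forall>x\<in>set L. c \<le> x) \<and> (\<forall>j. count_list L j \<le> 2) \<and> nc L"
definition SB :: "int \<Rightarrow> nat \<Rightarrow> nat \<Rightarrow> nat \<Rightarrow> nat list set" where
  "SB n c k m = {L. TB c L \<and> int (sum_list L) = n \<and> kk L = k \<and> mm L = m}"

lemma cnt_pos: "count_list L x \<noteq> 0 \<Longrightarrow> x \<in> set L"
  using count_notin by fastforce
lemma fin_k: "finite {j. 2 \<le> count_list L j}"
  by (rule finite_subset[of _ "set L"]) (auto intro: cnt_pos)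
lemma fin_m: "finite {j. count_list L j = 1}"
  by (rule finite_subset[of _ "set L"]) (auto intro: cnt_pos)

lemma kk_cons_notin: "x \<notin> set L \<Longrightarrow> kk (x#L) = kk L"
  unfolding kk_def by (rule arg_cong[where f=card]) auto
lemma mm_cons_notin: "x \<notin> set L \<Longrightarrow> mm (x#L) = Suc (mm L)"
proof -
  assume x: "x \<notin> set L"
  have "{j. count_list (x#L) j = 1} = insert x {j. count_list L j = 1}" using x by auto
  moreover have "x \<notin> {j. count_list L j = 1}" using x by simp
  ultimately show ?thesis unfolding mm_def using card_insert_disjoint[OF fin_m] by metis
qed
lemma kk_cc_notin: "x \<notin> set L \<Longrightarrow> kk (x#x#L) = Suc (kk L)"
proof -
  assume x: "x \<notin> set L"
  have "{j. 2 \<le> count_list (x#x#L) j} = insert x {j. 2 \<le> count_list L j}" using x by auto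
  moreover have "x \<notin> {j. 2 \<le> count_list L j}" using x by simp
  ultimately show ?thesis unfolding kk_def using card_insert_disjoint[OF fin_k] by metis
qed
lemma mm_cc_notin: "x \<notin> set L \<Longrightarrow> mm (x#x#L) = mm L"
  unfolding mm_def by (rule arg_cong[where f=card]) auto
lemma kk_cons_ge2: "2 \<le> count_list L x \<Longrightarrow> kk (x#L) = kk L"
  unfolding kk_def by (rule arg_cong[where f=card]) auto
lemma mm_cons_ge2: "2 \<le> count_list L x \<Longrightarrow> mm (x#L) = mm L"
  unfolding mm_def by (rule arg_cong[where f=card]) auto

lemma kk_mm_nil: "kk L = 0 \<Longrightarrow> mm L = 0 \<Longrightarrow> L = []"
proof (rule ccontr)
  assume a: "kk L = 0" "mm L = 0" "L \<noteq> []"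
  then obtain x where x: "x \<in> set L" by (cases L) auto
  then have "count_list L x \<noteq> 0" by (simp add: count_list_0_iff)
  then consider "count_list L x = 1" | "2 \<le> count_list L x" by linarith
  then show False
  proof cases
    case 1 then have "x \<in> {j. count_list L j = 1}" by simp
    then show False using a fin_m[of L] unfolding mm_def by auto
  next
    case 2 then have "x \<in> {j. 2 \<le> count_list L j}" by simp
    then show False using a fin_k[of L] unfolding kk_def by auto
  qed
qed

lemma sum_ge_len: "(\<forall>x\<in>set L. 1 \<le> x) \<Longrightarrow> length L \<le> sum_list L"
  by (induction L) auto

lemma fin_lists: "finite {L::nat list. (\<forall>x\<in>set L. 1 \<le> x) \<and> sum_list L = n}"
proof (rule finite_subset[OF _ finite_lists_length_le[of "{..n}" n]])
  show "{L::nat list. (\<forall>x\<in>set L. 1 \<le> x) \<and> sum_list L = n} \<subseteq> {xs. set xs \<subseteq> {..n} \<and> length xs \<le> n}"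
    using sum_ge_len member_le_sum_list by fastforce
qed simp

lemma fin_SB: "1 \<le> c \<Longrightarrow> finite (SB n c k m)"
  by (rule finite_subset[OF _ fin_lists[of "nat n"]]) (auto simp: SB_def TB_def)

lemma sorted_head: assumes "sorted L" "\<forall>x\<in>set L. c \<le> x" "c \<in> set L" shows "\<exists>L'. L = c # L'"
proof (cases L)
  case Nil then show ?thesis using assms by simp
next
  case (Cons a L')
  then have "a \<le> c" using assms by auto
  moreover have "c \<le> a" using assms Cons by auto
  ultimately show ?thesis using Cons by auto
qed

lemma nc_cons: assumes "nc L" "\<forall>x\<in>set L. c+2 \<le> x" shows "nc (c#L)"
  unfolding nc_def
proof (intro allI notI)
  fix j assume j: "j \<in> set (c#L) \<and> Suc j \<in> set (c#L)"
  show False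
  proof (cases "j = c")
    case True then show False using j assms(2) by auto
  next
    case False
    then have "j \<in> set L" using j by auto
    then have "c + 2 \<le> j" using assms(2) by auto
    then have "Suc j \<in> set L" using j by auto
    then show False using \<open>j \<in> set L\<close> assms(1) unfolding nc_def by blast
  qed
qed

lemma nc_cc: "nc (c#L) \<Longrightarrow> nc (c#c#L)"
  unfolding nc_def by auto

lemma SB_eq:
  assumes c1: "1 \<le> c"
  shows "SB n c k m = SB n (Suc c) k m
    \<union> (if 0 < m then Cons c ` SB (n - int c) (c+2) k (m-1) else {})
    \<union> (if 0 < k then (\<lambda>L. c#c#L) ` SB (n - 2 * int c) (c+2) (k-1) m else {})"
  (is "?L = ?R")
proof
  show "?L \<subseteq> ?R"
  proof
    fix L assume L: "L \<in> ?L"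
    then have s: "sorted L" and ge: "\<forall>x\<in>set L. c \<le> x" and cnt: "\<forall>j. count_list L j \<le> 2"
      and ncL: "nc L" and sm: "int (sum_list L) = n" and kL: "kk L = k" and mL: "mm L = m"
      by (auto simp: SB_def TB_def)
    show "L \<in> ?R"
    proof (cases "c \<in> set L")
      case False
      then have "\<forall>x\<in>set L. Suc c \<le> x" using ge by (metis Suc_leI le_neq_implies_less)
      then show ?thesis using L by (auto simp: SB_def TB_def)
    next
      case True
      then obtain L1 where L1: "L = c # L1" using sorted_head[OF s ge] by blast
      have nc1: "Suc c \<notin> set L" using ncL True unfolding nc_def by blast
      show ?thesis
      proof (cases "c \<in> set L1")
        case True
        then obtain L2 where L2: "L1 = c # L2" using sorted_head[of L1 c] s ge L1 by auto
        have nin: "c \<notin> set L2" using cnt[rule_format, of c] L1 L2 by (auto simp: count_list_0_iff[symmetric])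
        have ge2: "\<forall>x\<in>set L2. c+2 \<le> x"
        proof
          fix x assume "x \<in> set L2"
          then have "c \<le> x" "x \<noteq> c" "x \<noteq> Suc c" using ge nin nc1 L1 L2 by auto
          then show "c + 2 \<le> x" by linarith
        qed
        have "TB (c+2) L2" using s cnt ncL ge2 unfolding TB_def nc_def L1 L2
        proof (intro conjI)
          show "\<forall>j. count_list L2 j \<le> 2"
          proof
            fix j show "count_list L2 j \<le> 2" using cnt[rule_format, of j] L1 L2 by (auto split: if_splits)
          qed
        qed (auto simp: sorted_simps)
        moreover have "kk L2 = k - 1" "0 < k" using kL kk_cc_notin[OF nin] L1 L2 by auto
        moreover have "mm L2 = m" using mL mm_cc_notin[OF nin] L1 L2 by auto
        moreover have "int (sum_list L2) = n - 2 * int c" using sm L1 L2 by simp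
        ultimately show ?thesis using L1 L2 by (auto simp: SB_def)
      next
        case False
        have ge2: "\<forall>x\<in>set L1. c+2 \<le> x"
        proof
          fix x assume "x \<in> set L1"
          then have "c \<le> x" "x \<noteq> c" "x \<noteq> Suc c" using ge False nc1 L1 by auto
          then show "c + 2 \<le> x" by linarith
        qed
        have "TB (c+2) L1" using s cnt ncL ge2 unfolding TB_def nc_def L1
        proof (intro conjI)
          show "\<forall>j. count_list L1 j \<le> 2"
          proof
            fix j show "count_list L1 j \<le> 2" using cnt[rule_format, of j] L1 by (auto split: if_splits)
          qed
        qed (auto simp: sorted_simps)
        moreover have "mm L1 = m - 1" "0 < m" using mL mm_cons_notin[OF False] L1 by auto
        moreover have "kk L1 = k" using kL kk_cons_notin[OF False] L1 by auto
        moreover have "int (sum_list L1) = n - int c" using sm L1 by simp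
        ultimately show ?thesis using L1 by (auto simp: SB_def)
      qed
    qed
  qed
next
  show "?R \<subseteq> ?L"
  proof
    fix L assume L: "L \<in> ?R"
    then consider "L \<in> SB n (Suc c) k m"
      | L1 where "0 < m" "L = c # L1" "L1 \<in> SB (n - int c) (c+2) k (m-1)"
      | L2 where "0 < k" "L = c # c # L2" "L2 \<in> SB (n - 2 * int c) (c+2) (k-1) m"
      by (auto split: if_splits)
    then show "L \<in> ?L"
    proof cases
      case 1 then show ?thesis by (auto simp: SB_def TB_def)
    next
      case 2
      then have T: "TB (c+2) L1" and s: "int (sum_list L1) = n - int c" "kk L1 = k" "mm L1 = m - 1"
        by (auto simp: SB_def)
      have nin: "c \<notin> set L1" "Suc c \<notin> set L1" using T by (auto simp: TB_def)
      have "TB c L" unfolding TB_def 2(2)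
      proof (intro conjI)
        show "sorted (c # L1)" using T by (auto simp: TB_def)
        show "\<forall>x\<in>set (c # L1). c \<le> x" using T by (auto simp: TB_def)
        show "\<forall>j. count_list (c # L1) j \<le> 2" using T nin by (auto simp: TB_def)
        show "nc (c # L1)" using T by (intro nc_cons) (auto simp: TB_def)
      qed
      then show ?thesis using s 2 mm_cons_notin[OF nin(1)] kk_cons_notin[OF nin(1)] by (auto simp: SB_def)
    next
      case 3
      then have T: "TB (c+2) L2" and s: "int (sum_list L2) = n - 2 * int c" "kk L2 = k - 1" "mm L2 = m"
        by (auto simp: SB_def)
      have nin: "c \<notin> set L2" "Suc c \<notin> set L2" using T by (auto simp: TB_def)
      have "TB c L" unfolding TB_def 3(2)
      proof (intro conjI)
        show "sorted (c # c # L2)" using T by (auto simp: TB_def)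
        show "\<forall>x\<in>set (c # c # L2). c \<le> x" using T by (auto simp: TB_def)
        show "\<forall>j. count_list (c # c # L2) j \<le> 2" using T nin by (auto simp: TB_def)
        show "nc (c # c # L2)" using T by (intro nc_cc nc_cons) (auto simp: TB_def)
      qed
      then show ?thesis using s 3 mm_cc_notin[OF nin(1)] kk_cc_notin[OF nin(1)] by (auto simp: SB_def)
    qed
  qed
qed

lemma SB_nonneg: "L \<in> SB n c k m \<Longrightarrow> 0 \<le> n"
  by (auto simp: SB_def)

lemma SB_00: "SB n c 0 0 = (if n = 0 then {[]} else {})"
proof -
  have "L \<in> SB n c 0 0 \<longleftrightarrow> L = [] \<and> n = 0" for L
  proof
    assume "L \<in> SB n c 0 0"
    then have "L = []" "int (sum_list L) = n" using kk_mm_nil by (auto simp: SB_def)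
    then show "L = [] \<and> n = 0" by simp
  next
    assume "L = [] \<and> n = 0"
    then show "L \<in> SB n c 0 0" by (simp add: SB_def TB_def nc_def kk_def mm_def)
  qed
  then show ?thesis by auto
qed

lemma SB_small: assumes "n < int c" "\<not> (k = 0 \<and> m = 0)" shows "SB n c k m = {}"
proof (rule ccontr)
  assume "SB n c k m \<noteq> {}"
  then obtain L where L: "L \<in> SB n c k m" by blast
  then have "L \<noteq> []" using assms(2) by (auto simp: SB_def kk_def mm_def)
  then obtain x L' where "L = x # L'" by (cases L) auto
  moreover have "\<forall>y\<in>set L. c \<le> y" using L by (auto simp: SB_def TB_def)
  ultimately have "c \<le> sum_list L" by auto
  then show False using L assms(1) by (auto simp: SB_def)
qed

lemma card_SB: "1 \<le> c \<Longrightarrow> int (card (SB n c k m)) = F n c k m"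
proof (induction "nat (n - int c + 1)" arbitrary: n c k m rule: less_induct)
  case less
  note c1 = less.prems
  show ?case
  proof (cases "n < 0")
    case True
    then have "SB n c k m = {}" using SB_nonneg by fastforce
    then show ?thesis using True by (simp add: F_neg)
  next
    case n0: False
    show ?thesis
    proof (cases "k = 0 \<and> m = 0")
      case True then show ?thesis by (auto simp: SB_00 F_00)
    next
      case km: False
      show ?thesis
      proof (cases "n < int c")
        case True then show ?thesis using km by (simp add: SB_small F_small)
      next
        case nc: False
        define A where "A = SB n (Suc c) k m"
        define B where "B = (if 0 < m then Cons c ` SB (n - int c) (c+2) k (m-1) else {})"
        define C where "C = (if 0 < k then (\<lambda>L. c#c#L) ` SB (n - 2 * int c) (c+2) (k-1) m else {})"
        have eq: "SB n c k m = A \<union> B \<union> C" unfolding A_def B_def C_def by (rule SB_eq[OF c1])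
        have fA: "finite A" unfolding A_def by (rule fin_SB) simp
        have fB: "finite B" unfolding B_def using fin_SB[of "c+2"] by auto
        have fC: "finite C" unfolding C_def using fin_SB[of "c+2"] by auto
        have nA: "c \<notin> set L" if "L \<in> A" for L
          using that unfolding A_def SB_def TB_def by auto
        have inB: "c \<in> set L \<and> c \<notin> set (tl L)" if "L \<in> B" for L
        proof -
          from that obtain L1 where "L = c # L1" "L1 \<in> SB (n - int c) (c+2) k (m-1)"
            unfolding B_def by (auto split: if_splits)
          moreover then have "c \<notin> set L1" unfolding SB_def TB_def by auto
          ultimately show ?thesis by simp
        qed
        have inC: "c \<in> set L \<and> c \<in> set (tl L)" if "L \<in> C" for L
          using that unfolding C_def by (auto split: if_splits)
        have dAB: "A \<inter> B = {}" using nA inB by blast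
        have dAC: "A \<inter> C = {}" using nA inC by blast
        have dBC: "B \<inter> C = {}" using inB inC by blast
        have cA: "int (card A) = F n (c+1) k m"
          unfolding A_def using less.hyps[of n "Suc c" k m] nc by simp
        have cB: "int (card B) = (if 0 < m then F (n - int c) (c+2) k (m-1) else 0)"
          unfolding B_def using less.hyps[of "n - int c" "c+2" k "m-1"] nc c1
          by (simp add: card_image)
        have cC: "int (card C) = (if 0 < k then F (n - 2 * int c) (c+2) (k-1) m else 0)"
          unfolding C_def using less.hyps[of "n - 2 * int c" "c+2" "k-1" m] nc c1
          by (simp add: card_image inj_on_def)
        have "card (SB n c k m) = card A + card B + card C"
          unfolding eq using fA fB fC dAB dAC dBC by (simp add: card_Un_disjoint Int_Un_distrib2)
        then show ?thesis using cA cB cC F_rec[OF c1, of n k m] by simp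
      qed
    qed
  qed
qed



definition good :: "nat \<Rightarrow> nat list \<Rightarrow> bool" where
  "good c L \<longleftrightarrow> (\<forall>j. 2 \<le> count_list L j \<longrightarrow> even (j + c) \<and>
      (\<forall>i. c \<le> i \<and> i \<le> j \<and> even (i + j) \<longrightarrow> 2 \<le> count_list L i))"
definition TU :: "nat \<Rightarrow> nat list \<Rightarrow> bool" where
  "TU c L \<longleftrightarrow> sorted L \<and> (\<forall>x\<in>set L. c \<le> x) \<and> nc L \<and> good c L"
definition SU :: "int \<Rightarrow> nat \<Rightarrow> nat \<Rightarrow> nat \<Rightarrow> nat list set" where
  "SU n c k m = {L. TU c L \<and> int (sum_list L) = n \<and> kk L = k \<and> mm L = m}"
definition SW :: "int \<Rightarrow> nat \<Rightarrow> nat \<Rightarrow> nat \<Rightarrow> nat list set" where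
  "SW n c k m = {L. c#c#L \<in> SU (n + 2 * int c) c (Suc k) m}"

lemma fin_SU: "1 \<le> c \<Longrightarrow> finite (SU n c k m)"
  by (rule finite_subset[OF _ fin_lists[of "nat n"]]) (auto simp: SU_def TU_def)

lemma fin_SW: "1 \<le> c \<Longrightarrow> finite (SW n c k m)"
  by (rule finite_subset[OF _ fin_lists[of "nat n"]]) (fastforce simp: SW_def SU_def TU_def)

lemma kk0: "kk L = 0 \<Longrightarrow> count_list L j \<le> 1"
proof (rule ccontr)
  assume "kk L = 0" "\<not> count_list L j \<le> 1"
  then have "j \<in> {j. 2 \<le> count_list L j}" by simp
  then show False using \<open>kk L = 0\<close> fin_k[of L] unfolding kk_def by auto
qed

lemma E1: "SU n c 0 m = SB n c 0 m"
proof -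
  have "TU c L \<longleftrightarrow> TB c L" if "kk L = 0" for L
    using kk0[OF that] unfolding TU_def TB_def good_def
    by (metis Suc_1 not_less_eq_eq le_SucI)
  then show ?thesis unfolding SU_def SB_def by blast
qed

lemma good_cong: "(\<And>j. 2 \<le> count_list L j \<longleftrightarrow> 2 \<le> count_list M j) \<Longrightarrow> good c L = good c M"
  unfolding good_def by simp

lemma Ldrop:
  assumes "2 \<le> count_list M c"
  shows "c#M \<in> SU (n + int c) c k m \<longleftrightarrow> M \<in> SU n c k m"
proof -
  have cM: "c \<in> set M" using assms cnt_pos by fastforce
  have g: "good c (c#M) = good c M" by (rule good_cong) (use assms in auto)
  have ncs: "nc (c#M) = nc M" unfolding nc_def using cM by auto
  have "TU c (c#M) \<longleftrightarrow> TU c M" unfolding TU_def using g ncs cM by auto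
  then show ?thesis unfolding SU_def using kk_cons_ge2[OF assms] mm_cons_ge2[OF assms] by auto
qed

lemma LU_notin: "L \<in> SU n (c+2) k m \<Longrightarrow> c \<notin> set L"
  by (auto simp: SU_def TU_def)

lemma LU:
  assumes c1: "1 \<le> c" and nin: "c \<notin> set L"
  shows "c#c#L \<in> SU (n + 2 * int c) c (Suc k) m \<longleftrightarrow> L \<in> SU n (c+2) k m"
proof
  assume H: "c#c#L \<in> SU (n + 2 * int c) c (Suc k) m"
  then have s: "sorted (c#c#L)" and ge: "\<forall>x\<in>set (c#c#L). c \<le> x" and ncc: "nc (c#c#L)"
    and gd: "good c (c#c#L)" and sm: "int (sum_list (c#c#L)) = n + 2 * int c"
    and kc: "kk (c#c#L) = Suc k" and mc: "mm (c#c#L) = m"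
    by (auto simp: SU_def TU_def)
  have nsc: "Suc c \<notin> set L" using ncc unfolding nc_def by auto
  have ge2: "\<forall>x\<in>set L. c + 2 \<le> x"
  proof
    fix x assume x: "x \<in> set L"
    then have "c \<le> x" "x \<noteq> c" "x \<noteq> Suc c" using ge nin nsc by auto
    then show "c + 2 \<le> x" by linarith
  qed
  have ncL: "nc L" using ncc unfolding nc_def by auto
  have gL: "good (c+2) L" unfolding good_def
  proof (intro allI impI)
    fix j assume j: "2 \<le> count_list L j"
    then have jL: "j \<in> set L" using cnt_pos by fastforce
    then have jc: "j \<noteq> c" "c + 2 \<le> j" using nin ge2 by auto
    have cj: "2 \<le> count_list (c#c#L) j" using j jc by simp
    have ev: "even (j + c)" using gd cj unfolding good_def by blast
    have all: "\<forall>i. c \<le> i \<and> i \<le> j \<and> even (i + j) \<longrightarrow> 2 \<le> count_list (c#c#L) i"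
      using gd cj unfolding good_def by blast
    have A: "\<forall>i. c + 2 \<le> i \<and> i \<le> j \<and> even (i + j) \<longrightarrow> 2 \<le> count_list L i"
    proof (intro allI impI)
      fix i assume i: "c + 2 \<le> i \<and> i \<le> j \<and> even (i + j)"
      have "c \<le> i" using i by linarith
      then have "2 \<le> count_list (c#c#L) i" using all i by blast
      then show "2 \<le> count_list L i" using i by (auto split: if_splits)
    qed
    show "even (j + (c+2)) \<and> (\<forall>i. c + 2 \<le> i \<and> i \<le> j \<and> even (i + j) \<longrightarrow> 2 \<le> count_list L i)"
      using ev A by simp
  qed
  have "TU (c+2) L" unfolding TU_def using s ge2 ncL gL by (auto simp: sorted_simps)
  then show "L \<in> SU n (c+2) k m"
    using sm kc mc kk_cc_notin[OF nin] mm_cc_notin[OF nin] by (auto simp: SU_def)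
next
  assume H: "L \<in> SU n (c+2) k m"
  then have T: "TU (c+2) L" and sm: "int (sum_list L) = n" and kc: "kk L = k" and mc: "mm L = m"
    by (auto simp: SU_def)
  have ge2: "\<forall>x\<in>set L. c + 2 \<le> x" and ncL: "nc L" and gL: "good (c+2) L" and sL: "sorted L"
    using T by (auto simp: TU_def)
  have gd: "good c (c#c#L)" unfolding good_def
  proof (intro allI impI)
    fix j assume j: "2 \<le> count_list (c#c#L) j"
    show "even (j + c) \<and> (\<forall>i. c \<le> i \<and> i \<le> j \<and> even (i + j) \<longrightarrow> 2 \<le> count_list (c#c#L) i)"
    proof (cases "j = c")
      case True
      then show ?thesis using nin by auto
    next
      case False
      then have jL: "2 \<le> count_list L j" using j by simp
      then have "j \<in> set L" using cnt_pos by fastforce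
      then have jge: "c + 2 \<le> j" using ge2 by auto
      have ev: "even (j + (c+2))" using gL jL unfolding good_def by blast
      then have ev': "even (j + c)" by simp
      show ?thesis
      proof (intro conjI allI impI)
        show "even (j + c)" by (rule ev')
        fix i assume i: "c \<le> i \<and> i \<le> j \<and> even (i + j)"
        show "2 \<le> count_list (c#c#L) i"
        proof (cases "i = c")
          case True then show ?thesis by simp
        next
          case False
          have "i \<noteq> Suc c" using i ev' by auto
          then have "c + 2 \<le> i" using i False by linarith
          then have "2 \<le> count_list L i" using gL jL i unfolding good_def by blast
          then show ?thesis by simp
        qed
      qed
    qed
  qed
  have "TU c (c#c#L)" unfolding TU_def
    using sL ge2 gd nc_cc[OF nc_cons[OF ncL ge2]] by (auto simp: sorted_simps)
  then show "c#c#L \<in> SU (n + 2 * int c) c (Suc k) m"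
    using sm kc mc kk_cc_notin[OF nin] mm_cc_notin[OF nin] by (auto simp: SU_def)
qed

lemma E2:
  assumes c1: "1 \<le> c"
  shows "SU n c (Suc k) m = (\<lambda>L. c#c#L) ` SW (n - 2 * int c) c k m"
proof
  show "(\<lambda>L. c#c#L) ` SW (n - 2 * int c) c k m \<subseteq> SU n c (Suc k) m"
    unfolding SW_def by auto
next
  show "SU n c (Suc k) m \<subseteq> (\<lambda>L. c#c#L) ` SW (n - 2 * int c) c k m"
  proof
    fix L assume L: "L \<in> SU n c (Suc k) m"
    then have s: "sorted L" and ge: "\<forall>x\<in>set L. c \<le> x" and gd: "good c L" and kL: "kk L = Suc k"
      by (auto simp: SU_def TU_def)
    have "{j. 2 \<le> count_list L j} \<noteq> {}" using kL unfolding kk_def by (metis card.empty nat.distinct(1))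
    then obtain j where j: "2 \<le> count_list L j" by blast
    then have "j \<in> set L" using cnt_pos by fastforce
    then have "c \<le> j" using ge by auto
    have all: "\<forall>i. c \<le> i \<and> i \<le> j \<and> even (i + j) \<longrightarrow> 2 \<le> count_list L i"
      and ev: "even (j + c)" using gd j unfolding good_def by blast+
    have "even (c + j)" using ev by (simp add: add.commute)
    then have cc: "2 \<le> count_list L c" using all \<open>c \<le> j\<close> by blast
    then have "c \<in> set L" using cnt_pos by fastforce
    then obtain L1 where L1: "L = c # L1" using sorted_head[OF s ge] by blast
    have "c \<in> set L1" using cc L1 cnt_pos[of L1 c] by auto
    moreover have "sorted L1" "\<forall>x\<in>set L1. c \<le> x" using s ge L1 by auto
    ultimately obtain L2 where L2: "L1 = c # L2" using sorted_head by blast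
    have "L2 \<in> SW (n - 2 * int c) c k m" unfolding SW_def using L L1 L2 by simp
    then show "L \<in> (\<lambda>L. c#c#L) ` SW (n - 2 * int c) c k m" using L1 L2 by blast
  qed
qed

lemma E3:
  assumes c1: "1 \<le> c"
  shows "SW n c k m = Cons c ` SW (n - int c) c k m \<union> SU n (c+2) k m"
proof
  show "SW n c k m \<subseteq> Cons c ` SW (n - int c) c k m \<union> SU n (c+2) k m"
  proof
    fix L assume L: "L \<in> SW n c k m"
    then have H: "c#c#L \<in> SU (n + 2 * int c) c (Suc k) m" by (simp add: SW_def)
    then have s: "sorted L" and ge: "\<forall>x\<in>set L. c \<le> x"
      by (auto simp: SU_def TU_def sorted_simps)
    show "L \<in> Cons c ` SW (n - int c) c k m \<union> SU n (c+2) k m"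
    proof (cases "c \<in> set L")
      case True
      then obtain L' where L': "L = c # L'" using sorted_head[OF s ge] by blast
      have cnt: "2 \<le> count_list (c#c#L') c" by simp
      have eq: "n + 2 * int c = (n - int c + 2 * int c) + int c" by simp
      have "c#(c#c#L') \<in> SU ((n - int c + 2 * int c) + int c) c (Suc k) m" using H L' eq by simp
      then have "c#c#L' \<in> SU (n - int c + 2 * int c) c (Suc k) m" using Ldrop[OF cnt] by blast
      then have "L' \<in> SW (n - int c) c k m" by (simp add: SW_def)
      then show ?thesis using L' by blast
    next
      case False
      then show ?thesis using LU[OF c1 False] H by blast
    qed
  qed
next
  show "Cons c ` SW (n - int c) c k m \<union> SU n (c+2) k m \<subseteq> SW n c k m"
  proof
    fix L assume L: "L \<in> Cons c ` SW (n - int c) c k m \<union> SU n (c+2) k m"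
    then show "L \<in> SW n c k m"
    proof
      assume "L \<in> Cons c ` SW (n - int c) c k m"
      then obtain L' where L': "L = c # L'" "c#c#L' \<in> SU (n - int c + 2 * int c) c (Suc k) m"
        by (auto simp: SW_def)
      have cnt: "2 \<le> count_list (c#c#L') c" by simp
      have "c#(c#c#L') \<in> SU ((n - int c + 2 * int c) + int c) c (Suc k) m"
        using Ldrop[OF cnt] L'(2) by blast
      moreover have "(n - int c + 2 * int c) + int c = n + 2 * int c" by simp
      ultimately have "c#(c#c#L') \<in> SU (n + 2 * int c) c (Suc k) m" by metis
      then show ?thesis using L' by (simp add: SW_def)
    next
      assume H: "L \<in> SU n (c+2) k m"
      then show ?thesis using LU[OF c1 LU_notin[OF H]] by (simp add: SW_def)
    qed
  qed
qed

lemma card_SW: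
  assumes c1: "1 \<le> c" and IH: "\<And>n'. int (card (SU n' (c+2) k m)) = U k n' (c+2) m"
  shows "int (card (SW n c k m)) = Wg (\<lambda>x. U k x (c+2) m) c n"
proof (induction "nat (n+1)" arbitrary: n rule: less_induct)
  case less
  show ?case
  proof (cases "n < 0")
    case True
    have "SW n c k m = {}"
    proof (rule ccontr)
      assume "SW n c k m \<noteq> {}"
      then obtain L where "c#c#L \<in> SU (n + 2 * int c) c (Suc k) m" by (auto simp: SW_def)
      then have "int (sum_list L) = n" by (simp add: SU_def)
      then show False using True by simp
    qed
    then show ?thesis using True by (simp add: Wg_neg)
  next
    case False
    have d: "Cons c ` SW (n - int c) c k m \<inter> SU n (c+2) k m = {}"
      using LU_notin by fastforce
    have "card (SW n c k m) = card (Cons c ` SW (n - int c) c k m) + card (SU n (c+2) k m)"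
      unfolding E3[OF c1, of n k m]
      by (rule card_Un_disjoint[OF _ _ d]) (simp_all add: fin_SW[OF c1] fin_SU c1)
    also have "card (Cons c ` SW (n - int c) c k m) = card (SW (n - int c) c k m)"
      by (rule card_image) simp
    finally have "int (card (SW n c k m)) = int (card (SW (n - int c) c k m)) + int (card (SU n (c+2) k m))"
      by simp
    also have "int (card (SW (n - int c) c k m)) = Wg (\<lambda>x. U k x (c+2) m) c (n - int c)"
      using less.hyps[of "n - int c"] False c1 by simp
    also have "int (card (SU n (c+2) k m)) = U k n (c+2) m" by (rule IH)
    finally show ?thesis using Wg_rec[OF c1, of n] False by simp
  qed
qed

lemma card_SU: "1 \<le> c \<Longrightarrow> int (card (SU n c k m)) = U k n c m"
proof (induction k arbitrary: n c)
  case 0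
  then show ?case using card_SB[OF 0] by (simp add: E1)
next
  case (Suc k)
  have "card (SU n c (Suc k) m) = card (SW (n - 2 * int c) c k m)"
    unfolding E2[OF Suc.prems] by (rule card_image) (simp add: inj_on_def)
  then have "int (card (SU n c (Suc k) m)) = Wg (\<lambda>x. U k x (c+2) m) c (n - 2 * int c)"
    using card_SW[OF Suc.prems Suc.IH] by simp
  then show ?case by simp
qed



lemma adj_nc:
  "sorted_wrt (\<ge>) p \<Longrightarrow> (\<forall>i. i+1 < length p \<longrightarrow> p!i \<noteq> Suc (p!(i+1))) \<Longrightarrow> nc p"
proof (induction p)
  case Nil then show ?case by (simp add: nc_def)
next
  case (Cons x xs)
  have sx: "\<forall>y\<in>set xs. y \<le> x" and sxs: "sorted_wrt (\<ge>) xs" using Cons.prems(1) by auto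
  have adjxs: "\<forall>i. i+1 < length xs \<longrightarrow> xs!i \<noteq> Suc (xs!(i+1))"
  proof (intro allI impI)
    fix i assume "i+1 < length xs"
    then show "xs!i \<noteq> Suc (xs!(i+1))" using Cons.prems(2)[rule_format, of "Suc i"] by simp
  qed
  have ncxs: "nc xs" using Cons.IH[OF sxs adjxs] .
  show ?case unfolding nc_def
  proof (intro allI notI)
    fix j assume j: "j \<in> set (x#xs) \<and> Suc j \<in> set (x#xs)"
    show False
    proof (cases "j \<in> set xs \<and> Suc j \<in> set xs")
      case True then show False using ncxs unfolding nc_def by blast
    next
      case False
      then consider "j = x" "Suc j \<in> set xs" | "Suc j = x" "j \<in> set xs" | "j = x" "Suc j = x"
        using j by auto
      then show False
      proof cases
        case 1 then show False using sx by fastforce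
      next
        case 2
        then obtain y ys where xs: "xs = y # ys" by (cases xs) auto
        have yx: "y \<le> x" using sx xs by auto
        have yj: "j \<le> y" using 2(2) xs sxs by auto
        have "x \<noteq> Suc y" using Cons.prems(2)[rule_format, of 0] xs by simp
        then have "y = Suc j" using yx yj 2(1) by linarith
        then show False using ncxs 2(2) xs unfolding nc_def by auto
      next
        case 3 then show False by simp
      qed
    qed
  qed
qed

lemma B31_char:
  assumes s: "sorted_wrt (\<ge>) p" and z: "0 \<notin> set p"
  shows "B31_cond p \<longleftrightarrow> (\<forall>x\<in>set p. 2 \<le> x) \<and> (\<forall>j. count_list p j \<le> 2) \<and> nc p"
proof
  assume B: "B31_cond p"
  then have m1: "count_list p 1 = 0" and mj: "\<forall>j\<ge>1. count_list p j + count_list p (j+1) \<le> 2"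
    and ad: "\<forall>i. i + 1 < length p \<longrightarrow> p!i - p!(i+1) \<le> 1 \<longrightarrow> even (p!i + p!(i+1))"
    by (auto simp: B31_cond_def)
  have "1 \<notin> set p" using m1 by (simp add: count_list_0_iff)
  then have g2: "\<forall>x\<in>set p. 2 \<le> x" using z by (metis One_nat_def less_2_cases not_le)
  have cj: "\<forall>j. count_list p j \<le> 2"
  proof
    fix j show "count_list p j \<le> 2"
    proof (cases "j = 0")
      case True then show ?thesis using z by simp
    next
      case False then show ?thesis using mj[rule_format, of j] by simp
    qed
  qed
  have "\<forall>i. i+1 < length p \<longrightarrow> p!i \<noteq> Suc (p!(i+1))"
  proof (intro allI impI notI)
    fix i assume "i + 1 < length p" "p!i = Suc (p!(i+1))"
    then show False using ad[rule_format, of i] by simp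
  qed
  then have "nc p" using adj_nc[OF s] by blast
  then show "(\<forall>x\<in>set p. 2 \<le> x) \<and> (\<forall>j. count_list p j \<le> 2) \<and> nc p" using g2 cj by blast
next
  assume H: "(\<forall>x\<in>set p. 2 \<le> x) \<and> (\<forall>j. count_list p j \<le> 2) \<and> nc p"
  then have g2: "\<forall>x\<in>set p. 2 \<le> x" and cj: "\<forall>j. count_list p j \<le> 2" and ncp: "nc p" by auto
  have "1 \<notin> set p" using g2 by fastforce
  then have "count_list p 1 = 0" by (simp add: count_list_0_iff)
  moreover have "\<forall>j\<ge>1. count_list p j + count_list p (j+1) \<le> 2"
  proof (intro allI impI)
    fix j :: nat assume "1 \<le> j"
    show "count_list p j + count_list p (j+1) \<le> 2"
    proof (cases "j \<in> set p")
      case True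
      then have "Suc j \<notin> set p" using ncp unfolding nc_def by blast
      then show ?thesis using cj by simp
    next
      case False then show ?thesis using cj by simp
    qed
  qed
  moreover have "\<forall>i. i + 1 < length p \<longrightarrow> p!i - p!(i+1) \<le> 1 \<longrightarrow> even (p!i + p!(i+1))"
  proof (intro allI impI)
    fix i assume i: "i + 1 < length p" "p!i - p!(i+1) \<le> 1"
    have ge: "p!(i+1) \<le> p!i" using s i(1) by (simp add: sorted_wrt_iff_nth_less)
    show "even (p!i + p!(i+1))"
    proof (cases "p!i = p!(i+1)")
      case True then show ?thesis by simp
    next
      case False
      then have "p!i = Suc (p!(i+1))" using ge i(2) by linarith
      moreover have "p!i \<in> set p" "p!(i+1) \<in> set p" using i(1) by auto
      ultimately show ?thesis using ncp unfolding nc_def by metis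
    qed
  qed
  ultimately show "B31_cond p" by (simp add: B31_cond_def)
qed

lemma R1_props:
  assumes "\<exists>j. 2 \<le> count_list L j"
  shows "2 \<le> count_list L (R1 L)" "\<And>j. 2 \<le> count_list L j \<Longrightarrow> j \<le> R1 L"
proof -
  have R: "R1 L = Max {j. 2 \<le> count_list L j}" using assms by (simp add: R1_def)
  have ne: "{j. 2 \<le> count_list L j} \<noteq> {}" using assms by blast
  show "2 \<le> count_list L (R1 L)" unfolding R using Max_in[OF fin_k ne] by simp
  show "\<And>j. 2 \<le> count_list L j \<Longrightarrow> j \<le> R1 L" unfolding R by (rule Max_ge[OF fin_k]) simp
qed

lemma R1_none: "\<not> (\<exists>j. 2 \<le> count_list L j) \<Longrightarrow> R1 L = 0"
  by (simp add: R1_def)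

lemma T_char:
  assumes z: "0 \<notin> set L"
  shows "T_cond L \<longleftrightarrow> (\<forall>x\<in>set L. 2 \<le> x) \<and> nc L \<and> good 2 L"
proof
  assume T: "T_cond L"
  then have c1: "\<forall>j. odd j \<longrightarrow> count_list L j \<le> 1"
    and c2: "\<forall>j. odd j \<and> j < R1 L + 2 \<longrightarrow> count_list L j = 0"
    and c3: "\<forall>j. even j \<and> 0 < j \<and> j < R1 L \<longrightarrow> 2 \<le> count_list L j"
    and c4: "\<forall>j. \<not> (j \<in> set L \<and> j + 1 \<in> set L)"
    by (auto simp: T_cond_def)
  have "count_list L 1 = 0" using c2 by simp
  then have "1 \<notin> set L" by (simp add: count_list_0_iff)
  then have g2: "\<forall>x\<in>set L. 2 \<le> x" using z by (metis One_nat_def less_2_cases not_le)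
  have ncL: "nc L" using c4 unfolding nc_def by simp
  have gd: "good 2 L" unfolding good_def
  proof (intro allI impI)
    fix j assume j: "2 \<le> count_list L j"
    have ex: "\<exists>j. 2 \<le> count_list L j" using j by blast
    have jR: "j \<le> R1 L" using R1_props(2)[OF ex j] .
    have Rc: "2 \<le> count_list L (R1 L)" using R1_props(1)[OF ex] .
    have ej: "even j"
    proof (rule ccontr)
      assume "odd j" then have "count_list L j \<le> 1" using c1 by blast
      then show False using j by linarith
    qed
    have A: "\<forall>i. 2 \<le> i \<and> i \<le> j \<and> even (i + j) \<longrightarrow> 2 \<le> count_list L i"
    proof (intro allI impI)
      fix i assume i: "2 \<le> i \<and> i \<le> j \<and> even (i + j)"
      then have ei: "even i" using ej by simp
      show "2 \<le> count_list L i"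
      proof (cases "i < R1 L")
        case True then show ?thesis using c3 ei i by simp
      next
        case False then have "i = R1 L" using i jR by linarith
        then show ?thesis using Rc by simp
      qed
    qed
    show "even (j + 2) \<and> (\<forall>i. 2 \<le> i \<and> i \<le> j \<and> even (i + j) \<longrightarrow> 2 \<le> count_list L i)"
      using ej A by simp
  qed
  show "(\<forall>x\<in>set L. 2 \<le> x) \<and> nc L \<and> good 2 L" using g2 ncL gd by blast
next
  assume H: "(\<forall>x\<in>set L. 2 \<le> x) \<and> nc L \<and> good 2 L"
  then have g2: "\<forall>x\<in>set L. 2 \<le> x" and ncL: "nc L" and gd: "good 2 L" by auto
  have gd1: "\<And>j. 2 \<le> count_list L j \<Longrightarrow> even j" using gd unfolding good_def by simp
  have gd2: "\<And>j i. 2 \<le> count_list L j \<Longrightarrow> 2 \<le> i \<Longrightarrow> i \<le> j \<Longrightarrow> even (i + j) \<Longrightarrow> 2 \<le> count_list L i"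
    using gd unfolding good_def by blast
  have c1: "\<forall>j. odd j \<longrightarrow> count_list L j \<le> 1"
    using gd1 by (metis not_less_eq_eq Suc_1)
  have c2: "\<forall>j. odd j \<and> j < R1 L + 2 \<longrightarrow> count_list L j = 0"
  proof (intro allI impI)
    fix j assume j: "odd j \<and> j < R1 L + 2"
    show "count_list L j = 0"
    proof (rule ccontr)
      assume "count_list L j \<noteq> 0"
      then have jL: "j \<in> set L" by (rule cnt_pos)
      then have j2: "2 \<le> j" using g2 by blast
      show False
      proof (cases "\<exists>i. 2 \<le> count_list L i")
        case False
        then show False using R1_none[OF False] j j2 by simp
      next
        case True
        define R where "R = R1 L"
        have Rc: "2 \<le> count_list L R" using R1_props(1)[OF True] R_def by simp
        have eR: "even R" using gd1[OF Rc] .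
        have RL: "R \<in> set L" using Rc cnt_pos by fastforce
        have "j \<noteq> R + 1"
        proof
          assume "j = R + 1"
          then show False using RL jL ncL unfolding nc_def by auto
        qed
        moreover have "j \<noteq> R" using eR j by auto
        ultimately have jR: "j < R" using j R_def by linarith
        have j3: "3 \<le> j" using j j2 by (metis Suc_1 eval_nat_numeral(3) dvd_refl le_antisym not_less_eq_eq)
        have "2 \<le> count_list L (j - 1)"
          by (rule gd2[OF Rc]) (use j3 jR j eR in auto)
        then have "j - 1 \<in> set L" using cnt_pos by fastforce
        moreover have "Suc (j - 1) = j" using j3 by simp
        ultimately show False using jL ncL unfolding nc_def by metis
      qed
    qed
  qed
  have c3: "\<forall>j. even j \<and> 0 < j \<and> j < R1 L \<longrightarrow> 2 \<le> count_list L j"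
  proof (intro allI impI)
    fix j assume j: "even j \<and> 0 < j \<and> j < R1 L"
    then have ex: "\<exists>i. 2 \<le> count_list L i" using R1_none by fastforce
    have Rc: "2 \<le> count_list L (R1 L)" using R1_props(1)[OF ex] .
    have eR: "even (R1 L)" using gd1[OF Rc] .
    have "2 \<le> j" using j by presburger
    then show "2 \<le> count_list L j" using gd2[OF Rc] j eR by simp
  qed
  have c4: "\<forall>j. \<not> (j \<in> set L \<and> j + 1 \<in> set L)" using ncL unfolding nc_def by simp
  show "T_cond L" using c1 c2 c3 c4 by (simp add: T_cond_def)
qed

lemma kk_le: "(\<forall>x\<in>set L. 1 \<le> x) \<Longrightarrow> kk L \<le> sum_list L"
proof -
  assume a: "\<forall>x\<in>set L. 1 \<le> x"
  have "kk L \<le> card (set L)" unfolding kk_def by (rule card_mono) (auto intro: cnt_pos)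
  also have "\<dots> \<le> length L" by (rule card_length)
  also have "\<dots> \<le> sum_list L" using sum_ge_len[OF a] .
  finally show ?thesis .
qed

lemma mm_le: "(\<forall>x\<in>set L. 1 \<le> x) \<Longrightarrow> mm L \<le> sum_list L"
proof -
  assume a: "\<forall>x\<in>set L. 1 \<le> x"
  have "mm L \<le> card (set L)" unfolding mm_def by (rule card_mono) (auto intro: cnt_pos)
  also have "\<dots> \<le> length L" by (rule card_length)
  also have "\<dots> \<le> sum_list L" using sum_ge_len[OF a] .
  finally show ?thesis .
qed

lemma card_split:
  assumes fA: "finite A" and b: "\<forall>L\<in>A. kk L \<le> n \<and> mm L \<le> n"
  shows "card A = (\<Sum>k\<le>n. \<Sum>m\<le>n. card {L\<in>A. kk L = k \<and> mm L = m})"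
proof -
  have eq: "A = (\<Union>p\<in>{..n}\<times>{..n}. {L\<in>A. kk L = fst p \<and> mm L = snd p})" using b by auto
  have "card A = (\<Sum>p\<in>{..n}\<times>{..n}. card {L\<in>A. kk L = fst p \<and> mm L = snd p})"
    by (subst eq, rule card_UN_disjoint) (auto intro: finite_subset[OF _ fA])
  also have "\<dots> = (\<Sum>k\<le>n. \<Sum>m\<le>n. card {L\<in>A. kk L = k \<and> mm L = m})"
    by (simp add: sum.cartesian_product case_prod_beta)
  finally show ?thesis .
qed

lemma rev_img: "{p. Q (rev p)} = rev ` {L. Q L}"
  by (auto simp: image_iff) (metis rev_rev_ident)

lemma sorted_rev_iff: "sorted (rev p) \<longleftrightarrow> sorted_wrt (\<ge>) p"
  by (simp add: sorted_wrt_rev)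

lemma nc_rev: "nc (rev p) = nc p" by (simp add: nc_def)

lemma B31_lists: "B31 n = card {L. TB 2 L \<and> sum_list L = n}"
proof -
  have "p \<in> partitions n \<and> B31_cond p \<longleftrightarrow> TB 2 (rev p) \<and> sum_list (rev p) = n" for p
  proof
    assume H: "p \<in> partitions n \<and> B31_cond p"
    then have s: "sorted_wrt (\<ge>) p" and z: "0 \<notin> set p" and sm: "sum_list p = n"
      by (auto simp: partitions_def)
    show "TB 2 (rev p) \<and> sum_list (rev p) = n"
      using H B31_char[OF s z] sm s unfolding TB_def by (simp add: sorted_rev_iff nc_rev)
  next
    assume H: "TB 2 (rev p) \<and> sum_list (rev p) = n"
    then have s: "sorted_wrt (\<ge>) p" and g2: "\<forall>x\<in>set p. 2 \<le> x" and sm: "sum_list p = n"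
      by (auto simp: TB_def sorted_rev_iff)
    have z: "0 \<notin> set p" using g2 by fastforce
    show "p \<in> partitions n \<and> B31_cond p"
      using H B31_char[OF s z] s z sm unfolding TB_def partitions_def by (simp add: nc_rev)
  qed
  then have "{p \<in> partitions n. B31_cond p} = {p. TB 2 (rev p) \<and> sum_list (rev p) = n}" by blast
  also have "\<dots> = rev ` {L. TB 2 L \<and> sum_list L = n}" by (rule rev_img)
  finally show ?thesis unfolding B31_def by (simp add: card_image)
qed

lemma T_cond_rev: "T_cond (rev p) = T_cond p"
  by (simp add: T_cond_def R1_def)

lemma T_lists: "T n = card {L. TU 2 L \<and> sum_list L = n}"
proof -
  have "p \<in> partitions n \<and> T_cond p \<longleftrightarrow> TU 2 (rev p) \<and> sum_list (rev p) = n" for p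
  proof
    assume H: "p \<in> partitions n \<and> T_cond p"
    then have s: "sorted_wrt (\<ge>) p" and z: "0 \<notin> set p" and sm: "sum_list p = n"
      by (auto simp: partitions_def)
    have zr: "0 \<notin> set (rev p)" using z by simp
    have "T_cond (rev p)" using H T_cond_rev by simp
    then show "TU 2 (rev p) \<and> sum_list (rev p) = n"
      using T_char[OF zr] sm s unfolding TU_def by (simp add: sorted_rev_iff)
  next
    assume H: "TU 2 (rev p) \<and> sum_list (rev p) = n"
    then have s: "sorted_wrt (\<ge>) p" and g2: "\<forall>x\<in>set p. 2 \<le> x" and sm: "sum_list p = n"
      by (auto simp: TU_def sorted_rev_iff)
    have z: "0 \<notin> set p" using g2 by fastforce
    have zr: "0 \<notin> set (rev p)" using z by simp
    have "T_cond (rev p)" using T_char[OF zr] H unfolding TU_def by simp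
    then show "p \<in> partitions n \<and> T_cond p"
      using T_cond_rev s z sm unfolding partitions_def by simp
  qed
  then have "{p \<in> partitions n. T_cond p} = {p. TU 2 (rev p) \<and> sum_list (rev p) = n}" by blast
  also have "\<dots> = rev ` {L. TU 2 L \<and> sum_list L = n}" by (rule rev_img)
  finally show ?thesis unfolding T_def by (simp add: card_image)
qed

theorem theorem8:
  fixes n :: nat
  shows "B31 n = T n"
proof -
  define A where "A = {L. TB 2 L \<and> sum_list L = n}"
  define C where "C = {L. TU 2 L \<and> sum_list L = n}"
  have fA: "finite A" unfolding A_def
    by (rule finite_subset[OF _ fin_lists[of n]]) (auto simp: TB_def)
  have fC: "finite C" unfolding C_def
    by (rule finite_subset[OF _ fin_lists[of n]]) (auto simp: TU_def)
  have bA: "\<forall>L\<in>A. kk L \<le> n \<and> mm L \<le> n"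
  proof
    fix L assume "L \<in> A"
    then have "\<forall>x\<in>set L. 1 \<le> x" "sum_list L = n" by (auto simp: A_def TB_def)
    then show "kk L \<le> n \<and> mm L \<le> n" using kk_le mm_le by auto
  qed
  have bC: "\<forall>L\<in>C. kk L \<le> n \<and> mm L \<le> n"
  proof
    fix L assume "L \<in> C"
    then have "\<forall>x\<in>set L. 1 \<le> x" "sum_list L = n" by (auto simp: C_def TU_def)
    then show "kk L \<le> n \<and> mm L \<le> n" using kk_le mm_le by auto
  qed
  have eA: "{L\<in>A. kk L = k \<and> mm L = m} = SB (int n) 2 k m" for k m
    unfolding A_def SB_def by auto
  have eC: "{L\<in>C. kk L = k \<and> mm L = m} = SU (int n) 2 k m" for k m
    unfolding C_def SU_def by auto
  have "int (B31 n) = (\<Sum>k\<le>n. \<Sum>m\<le>n. int (card (SB (int n) 2 k m)))"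
    unfolding B31_lists A_def[symmetric] card_split[OF fA bA] eA by simp
  also have "\<dots> = (\<Sum>k\<le>n. \<Sum>m\<le>n. F (int n) 2 k m)"
    by (simp add: card_SB)
  also have "\<dots> = (\<Sum>k\<le>n. \<Sum>m\<le>n. U k (int n) 2 m)"
    by (simp add: main_eq)
  also have "\<dots> = (\<Sum>k\<le>n. \<Sum>m\<le>n. int (card (SU (int n) 2 k m)))"
    by (simp add: card_SU)
  also have "\<dots> = int (T n)"
    unfolding T_lists C_def[symmetric] card_split[OF fC bC] eC by simp
  finally show ?thesis by simp
qed

end
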